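(* Let $q:\mathsf D\to\mathbb R$ be a query with sensitivity $\Delta q$, and let $b>0$ be a random scale parameter such that $1/b$ has moment generating function $M_{1/b}(t)=\mathbb E[e^{t/b}]$. Then the R$^2$DP Laplace mechanism $\mathcal M_q(d,b)=q(d)+\mathrm{Lap}(b)$ is $$\ln\left[\frac{\mathbb E(1/b)}{\frac{d M_{1/b}(t)}{dt}\big|_{t=-\Delta q}}\right]\text{-differentially private.}$$
   Context: $\mathrm{Lap}(b)$ is the zero-mean Laplace distribution with density $\frac{1}{2b}e^{-|x|/b}$. In the R$^2$DP Laplace mechanism the scale $b$ is itself random (drawn from a fixed distribution on $(0,\infty)$, independently of the data) and, conditionally on $b$, noise $\mathrm{Lap}(b)$ is added to $q(d)$. Two datasets $d,d'$ are adjacent if one is obtained from the other by adding or removing the data of one individual; the sensitivity is $\Delta q=\max_{d,d'\text{ adjacent}}|q(d)-q(d')|$. A randomized mechanism $\mathcal M$ is $\epsilon$-differentially private if $\mathbb P(\mathcal M(d)\in S)\le e^{\epsilon}\mathbb P(\mathcal M(d')\in S)$ for all adjacent $d,d'$ and all measurable $S$. Here $\frac{dM_{1/b}}{dt}(t)=\mathbb E[\frac1b e^{t/b}]$. *)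

theory Defs
  imports "HOL-Probability.Probability" "HOL-Library.Multiset"
begin

definition adjacent :: "'a multiset \<Rightarrow> 'a multiset \<Rightarrow> bool" where
  "adjacent d d' \<longleftrightarrow> (\<exists>x. d' = d + {#x#} \<or> d = d' + {#x#})"

definition sensitivity :: "('a multiset \<Rightarrow> real) \<Rightarrow> real" where
  "sensitivity q = (SUP p \<in> {(d, d'). adjacent d d'}. \<bar>q (fst p) - q (snd p)\<bar>)"

definition lap_density :: "real \<Rightarrow> real \<Rightarrow> real" where
  "lap_density b x = exp (- \<bar>x\<bar> / b) / (2 * b)"

definition lap_measure :: "real \<Rightarrow> real \<Rightarrow> real measure" where
  "lap_measure b mu = density lborel (\<lambda>x. ennreal (lap_density b (x - mu)))"

definition r2dp_laplace :: "real measure \<Rightarrow> ('a multiset \<Rightarrow> real) \<Rightarrow> 'a multiset \<Rightarrow> real set \<Rightarrow> ennreal" where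
  "r2dp_laplace B q d S = (\<integral>\<^sup>+ b. emeasure (lap_measure b (q d)) S \<partial>B)"

definition differentially_private :: "real \<Rightarrow> ('a multiset \<Rightarrow> real set \<Rightarrow> ennreal) \<Rightarrow> bool" where
  "differentially_private eps M \<longleftrightarrow>
     (\<forall>d d'. adjacent d d' \<longrightarrow> (\<forall>S \<in> sets borel. M d S \<le> ennreal (exp eps) * M d' S))"

text \<open>Moment generating function of 1/b, and its derivative as given in the paper:
  dM/dt (t) = E[(1/b) e^(t/b)].\<close>
definition mgf_inv :: "real measure \<Rightarrow> real \<Rightarrow> real" where
  "mgf_inv B t = (\<integral> b. exp (t / b) \<partial>B)"

definition dmgf_inv :: "real measure \<Rightarrow> real \<Rightarrow> real" where
  "dmgf_inv B t = (\<integral> b. (1 / b) * exp (t / b) \<partial>B)"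

end

theory Submission
  imports Defs
begin

lemma sign_prod:
  fixes a s m v :: real
  assumes a: "a > 0" and s: "s \<ge> 0" and m: "m > 0"
  shows "(exp (- (a * v)) - m) * (exp (- (s * v)) - m powr (s/a)) \<ge> 0"
proof -
  define c where "c = - ln m / a"
  have "ln m * (s/a) = - (s * c)" unfolding c_def by simp
  then have k: "m powr (s/a) = exp (- (s * c))"
    using m by (simp add: powr_def mult.commute)
  have "ln m = - (a * c)" unfolding c_def using a by simp
  then have mc: "m = exp (- (a * c))" using m by (metis exp_ln)
  show ?thesis
  proof (cases "v \<le> c")
    case True
    have "s * v \<le> s * c" using mult_left_mono[OF True s] .
    then have 1: "exp (- (s * v)) \<ge> exp (- (s * c))" by simp
    have "a * v \<le> a * c" using mult_left_mono[OF True] a by simp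
    then have 2: "exp (- (a * v)) \<ge> m" unfolding mc by simp
    show ?thesis unfolding k using 1 2 by simp
  next
    case False
    then have F: "c \<le> v" by simp
    have "s * c \<le> s * v" using mult_left_mono[OF F s] .
    then have 1: "exp (- (s * v)) \<le> exp (- (s * c))" by simp
    have "a * c \<le> a * v" using mult_left_mono[OF F] a by simp
    then have 2: "exp (- (a * v)) \<le> m" unfolding mc by simp
    show ?thesis unfolding k using 1 2 by (simp add: mult_nonpos_nonpos)
  qed
qed
lemma key_ineq:
  fixes M :: "'b measure" and u :: "'b \<Rightarrow> real" and a s :: real
  assumes int: "integrable M u" and nn: "AE x in M. u x \<ge> 0" and a: "a \<ge> 0" and s: "s \<ge> 0"
  shows "(\<integral>x. u x * exp (-a * u x) \<partial>M) * (\<integral>x. u x * exp (-s * u x) \<partial>M)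
         \<le> (\<integral>x. u x \<partial>M) * (\<integral>x. u x * exp (-(a+s) * u x) \<partial>M)"
proof -
  have um[measurable]: "u \<in> borel_measurable M" using int by (rule borel_measurable_integrable)
  have intc: "integrable M (\<lambda>x. u x * exp (-c * u x))" if "c \<ge> 0" for c
  proof (rule Bochner_Integration.integrable_bound[OF int])
    show "(\<lambda>x. u x * exp (-c * u x)) \<in> borel_measurable M" by measurable
    show "AE x in M. norm (u x * exp (-c * u x)) \<le> norm (u x)"
      using nn
    proof eventually_elim
      case (elim x)
      have "exp (-c * u x) \<le> 1" using that elim by simp
      then show ?case using elim by (simp add: abs_mult mult_left_le)
    qed
  qed
  define W where "W = (\<integral>x. u x \<partial>M)"
  define F where "F = (\<integral>x. u x * exp (-a * u x) \<partial>M)"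
  define G where "G = (\<integral>x. u x * exp (-s * u x) \<partial>M)"
  define H where "H = (\<integral>x. u x * exp (-(a+s) * u x) \<partial>M)"
  have F0: "F \<ge> 0" unfolding F_def
    by (rule integral_nonneg_AE) (use nn in eventually_elim, simp)
  have G0: "G \<ge> 0" unfolding G_def
    by (rule integral_nonneg_AE) (use nn in eventually_elim, simp)
  have H0: "H \<ge> 0" unfolding H_def
    by (rule integral_nonneg_AE) (use nn in eventually_elim, simp)
  have "AE x in M. u x * exp (-a * u x) \<le> u x"
    using nn by eventually_elim (use a in \<open>simp add: mult_left_le\<close>)
  then have FW: "F \<le> W" unfolding F_def W_def
    by (rule integral_mono_AE[OF intc[OF a] int])
  have W0: "W \<ge> 0" using F0 FW by simp
  have "F * G \<le> W * H"
  proof (cases "a = 0 \<or> F = 0")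
    case True
    then show ?thesis
    proof
      assume "a = 0" then show ?thesis by (simp add: F_def G_def H_def W_def)
    next
      assume "F = 0"
      then show ?thesis using H0 W0 by simp
    qed
  next
    case False
    then have a': "a > 0" and Fp: "F > 0" using a F0 by auto
    with FW have Wp: "W > 0" by simp
    define m where "m = F / W"
    define k where "k = m powr (s/a)"
    have mp: "m > 0" using Fp Wp by (simp add: m_def)
    have "0 \<le> (\<integral>x. u x * ((exp (-a * u x) - m) * (exp (-s * u x) - k)) \<partial>M)"
      by (rule integral_nonneg_AE) (use nn in eventually_elim,
          simp add: k_def sign_prod[OF a' s mp])
    also have "(\<integral>x. u x * ((exp (-a * u x) - m) * (exp (-s * u x) - k)) \<partial>M)
       = (\<integral>x. (u x * exp (-(a+s) * u x) - k * (u x * exp (-a * u x))) - m * (u x * exp (-s * u x)) + (m*k) * u x \<partial>M)"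
      by (rule Bochner_Integration.integral_cong)
         (auto simp: algebra_simps exp_add[symmetric])
    also have "\<dots> = H - k * F - m * G + m * k * W"
      using intc[OF a] intc[OF s] intc[of "a+s"] a s int
      by (simp add: H_def F_def G_def W_def)
    also have "\<dots> = H - m * G"
      using Wp by (simp add: m_def)
    finally have "m * G \<le> H" by simp
    then show "F * G \<le> W * H" using Wp
      by (simp add: m_def field_simps)
  qed
  then show ?thesis unfolding F_def G_def H_def W_def .
qed

lemma intc_lemma:
  fixes M :: "'b measure" and u :: "'b \<Rightarrow> real"
  assumes int: "integrable M u" and nn: "AE x in M. u x \<ge> 0" and c: "c \<ge> 0"
  shows "integrable M (\<lambda>x. u x * exp (-c * u x))"
proof (rule Bochner_Integration.integrable_bound[OF int])
  have um[measurable]: "u \<in> borel_measurable M" using int by (rule borel_measurable_integrable)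
  show "(\<lambda>x. u x * exp (-c * u x)) \<in> borel_measurable M" by measurable
  show "AE x in M. norm (u x * exp (-c * u x)) \<le> norm (u x)"
    using nn
  proof eventually_elim
    case (elim x)
    have "exp (-c * u x) \<le> 1" using c elim by simp
    then show ?case using elim by (simp add: abs_mult mult_left_le)
  qed
qed

theorem theorem4p1:
  fixes B :: "real measure" and q :: "'a multiset \<Rightarrow> real"
  assumes "prob_space B"
    and "sets B = sets borel"
    and "AE b in B. b > 0"
    and "bdd_above {\<bar>q d - q d'\<bar> | d d'. adjacent d d'}"
    and "\<exists>\<delta>>0. \<forall>t\<in>{-\<delta><..<\<delta>}. integrable B (\<lambda>b. exp (t / b))"
  shows "differentially_private
           (ln ((\<integral> b. 1 / b \<partial>B) / dmgf_inv B (- sensitivity q)))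
           (r2dp_laplace B q)"
proof -
  interpret B: prob_space B by fact
  have Bm: "borel_measurable B = borel_measurable borel"
    by (rule measurable_cong_sets) (simp_all add: assms(2))
  define u where "u = (\<lambda>b::real. 1 / b)"
  have um: "u \<in> borel_measurable B" unfolding Bm u_def by measurable
  obtain \<delta> where \<delta>: "\<delta> > 0" "\<forall>t\<in>{-\<delta><..<\<delta>}. integrable B (\<lambda>b. exp (t / b))"
    using assms(5) by blast
  define t where "t = \<delta> / 2"
  have tin: "t \<in> {-\<delta><..<\<delta>}" using \<delta>(1) by (simp add: t_def)
  have t: "t > 0" "integrable B (\<lambda>b. exp (t / b))" using \<delta>(1) \<delta>(2)[rule_format, OF tin] by (auto simp: t_def)
  have uint: "integrable B u"
  proof (rule Bochner_Integration.integrable_bound[OF integrable_divide[OF t(2), of t]])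
    show "u \<in> borel_measurable B" by (rule um)
    show "AE b in B. norm (u b) \<le> norm (exp (t / b) / t)"
      using assms(3)
    proof eventually_elim
      case (elim b)
      have "t / b \<le> exp (t / b)" using exp_ge_add_one_self[of "t/b"] by linarith
      then have "(t / b) / t \<le> exp (t / b) / t" by (rule divide_right_mono) (use t in auto)
      moreover have "(t / b) / t = 1 / b" using t by simp
      ultimately show ?case using elim t by (simp add: u_def)
    qed
  qed
  have unn: "AE b in B. u b \<ge> 0" using assms(3) by eventually_elim (simp add: u_def)
  define I where "I = (\<lambda>a. \<integral>b. u b * exp (- a * u b) \<partial>B)"
  define W where "W = (\<integral>b. u b \<partial>B)"
  define \<Delta> where "\<Delta> = sensitivity q"
  define G where "G = dmgf_inv B (- \<Delta>)"

  have Iint: "integrable B (\<lambda>b. u b * exp (- a * u b))" if "a \<ge> 0" for a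
    using intc_lemma[OF uint unn that] .
  have Imono: "I c \<le> I a" if "0 \<le> a" "a \<le> c" for a c
    unfolding I_def
  proof (rule integral_mono_AE[OF Iint Iint])
    show "AE b in B. u b * exp (- c * u b) \<le> u b * exp (- a * u b)"
      using unn
    proof eventually_elim
      case (elim b)
      have "a * u b \<le> c * u b" using that elim by (simp add: mult_right_mono)
      then show ?case using elim by (simp add: mult_left_mono)
    qed
  qed (use that in auto)
  have Ipos: "I a > 0" if "a \<ge> 0" for a
  proof -
    have "I a \<ge> 0" unfolding I_def
      by (rule integral_nonneg_AE) (use unn in eventually_elim, simp)
    moreover have "I a \<noteq> 0"
    proof
      assume "I a = 0"
      then have "AE b in B. u b * exp (- a * u b) = 0"
        unfolding I_def
        by (subst (asm) integral_nonneg_eq_0_iff_AE[OF Iint[OF that]])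
           (use unn in eventually_elim, simp)
      then have "AE b in B. False" using assms(3)
        by eventually_elim (simp add: u_def)
      then show False using B.AE_False by simp
    qed
    ultimately show ?thesis by simp
  qed
  have WI: "W = I 0" unfolding W_def I_def by simp
  have adjset: "(\<lambda>p. \<bar>q (fst p) - q (snd p)\<bar>) ` {(d, d'). adjacent d d'}
      = {\<bar>q d - q d'\<bar> | d d'. adjacent d d'}" by force
  have sens: "\<bar>q d - q d'\<bar> \<le> \<Delta>" if "adjacent d d'" for d d'
  proof -
    have "(\<lambda>p. \<bar>q (fst p) - q (snd p)\<bar>) (d, d') \<le> \<Delta>"
      unfolding \<Delta>_def sensitivity_def
      by (rule cSUP_upper) (use that adjset assms(4) in auto)
    then show ?thesis by simp
  qed
  have \<Delta>0: "\<Delta> \<ge> 0"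
  proof -
    have "adjacent {#} {#undefined#}" by (simp add: adjacent_def)
    from sens[OF this] show ?thesis by linarith
  qed
  have GI: "G = I \<Delta>" unfolding G_def I_def dmgf_inv_def u_def
    by (rule Bochner_Integration.integral_cong) auto
  have Gp: "G > 0" using GI Ipos \<Delta>0 by simp
  have Wp: "W > 0" using WI Ipos by simp
  have eps: "exp (ln ((\<integral> b. 1 / b \<partial>B) / dmgf_inv B (- sensitivity q))) = W / G"
    using Gp Wp by (simp add: W_def G_def \<Delta>_def u_def)
  define g where "g = (\<lambda>\<mu> x. \<integral>\<^sup>+ b. ennreal (lap_density b (x - \<mu>)) \<partial>B)"
  have gI: "g \<mu> x = ennreal (I \<bar>x - \<mu>\<bar> / 2)" for \<mu> x
  proof -
    have "g \<mu> x = (\<integral>\<^sup>+ b. ennreal (u b * exp (- \<bar>x - \<mu>\<bar> * u b) / 2) \<partial>B)"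
      unfolding g_def lap_density_def u_def
      by (rule nn_integral_cong) (simp add: field_simps)
    also have "\<dots> = ennreal (\<integral>b. u b * exp (- \<bar>x - \<mu>\<bar> * u b) / 2 \<partial>B)"
      by (rule nn_integral_eq_integral) (use Iint[of "\<bar>x - \<mu>\<bar>"] unn in \<open>auto elim!: eventually_mono\<close>)
    also have "\<dots> = ennreal (I \<bar>x - \<mu>\<bar> / 2)" unfolding I_def by simp
    finally show ?thesis .
  qed
  have pm: "pair_sigma_finite (lborel :: real measure) B"
    by (simp add: pair_sigma_finite_def lborel.sigma_finite_measure_axioms B.sigma_finite_measure_axioms)
  have "sets ((lborel :: real measure) \<Otimes>\<^sub>M B) = sets (borel \<Otimes>\<^sub>M borel)"
    by (rule sets_pair_measure_cong[OF sets_lborel assms(2)])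
  then have PBs: "sets ((lborel :: real measure) \<Otimes>\<^sub>M B) = sets (borel \<Otimes>\<^sub>M (borel :: real measure))"
    by simp
  have PB: "borel_measurable ((lborel :: real measure) \<Otimes>\<^sub>M B) = (borel_measurable (borel \<Otimes>\<^sub>M borel) :: (real \<times> real \<Rightarrow> ennreal) set)"
    by (rule measurable_cong_sets[OF PBs refl])
  show ?thesis
    unfolding differentially_private_def
  proof (intro allI impI ballI)
    fix d d' :: "'a multiset" and S :: "real set"
    assume adj: "adjacent d d'" and S[measurable]: "S \<in> sets borel"
    have meas: "(\<lambda>(x, b). ennreal (lap_density b (x - \<mu>)) * indicator S x) \<in> borel_measurable (lborel \<Otimes>\<^sub>M B)" for \<mu>
      unfolding PB lap_density_def by measurable
    have R: "r2dp_laplace B q e S = (\<integral>\<^sup>+ x. g (q e) x * indicator S x \<partial>lborel)" for e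
    proof -
      have "r2dp_laplace B q e S = (\<integral>\<^sup>+ b. \<integral>\<^sup>+ x. ennreal (lap_density b (x - q e)) * indicator S x \<partial>lborel \<partial>B)"
        unfolding r2dp_laplace_def lap_measure_def
        by (rule nn_integral_cong) (simp add: emeasure_density lap_density_def)
      also have "\<dots> = (\<integral>\<^sup>+ x. \<integral>\<^sup>+ b. ennreal (lap_density b (x - q e)) * indicator S x \<partial>B \<partial>lborel)"
        using pair_sigma_finite.Fubini'[OF pm meas] by simp
      also have "\<dots> = (\<integral>\<^sup>+ x. g (q e) x * indicator S x \<partial>lborel)"
        unfolding g_def
        by (rule nn_integral_cong, rule nn_integral_multc) (simp add: Bm lap_density_def)
      finally show ?thesis .
    qed
    have gm: "(\<lambda>x. g \<mu> x * indicator S x) \<in> borel_measurable lborel" for \<mu>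
    proof -
      have "(\<lambda>x. \<integral>\<^sup>+ b. ennreal (lap_density b (x - \<mu>)) * indicator S x \<partial>B) \<in> borel_measurable lborel"
        by (rule B.borel_measurable_nn_integral) (use meas in simp)
      moreover have "(\<integral>\<^sup>+ b. ennreal (lap_density b (x - \<mu>)) * indicator S x \<partial>B) = g \<mu> x * indicator S x" for x
        unfolding g_def by (rule nn_integral_multc) (simp add: Bm lap_density_def)
      ultimately show ?thesis by simp
    qed
    have pw: "g (q d) x * indicator S x \<le> ennreal (W / G) * (g (q d') x * indicator S x)" for x
    proof -
      define a where "a = \<bar>x - q d\<bar>"
      define c where "c = \<bar>x - q d'\<bar>"
      have a0: "a \<ge> 0" and ca: "c \<le> a + \<Delta>"
        using sens[OF adj] by (auto simp: a_def c_def)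
      have key: "I a * G \<le> W * I (a + \<Delta>)"
        using key_ineq[OF uint unn a0 \<Delta>0] unfolding I_def W_def GI by simp
      have "I (a + \<Delta>) \<le> I c" using Imono[of c "a + \<Delta>"] ca unfolding c_def by simp
      then have "W * I (a + \<Delta>) \<le> W * I c" using Wp by simp
      with key have "I a * G \<le> W * I c" by linarith
      then have le: "I a / 2 \<le> W / G * (I c / 2)" using Gp by (simp add: field_simps)
      have "g (q d) x \<le> ennreal (W / G) * g (q d') x"
        unfolding gI a_def[symmetric] c_def[symmetric]
        using le Wp Gp Ipos[of c] by (simp add: ennreal_mult[symmetric] c_def)
      then show ?thesis
        by (cases "x \<in> S") (simp_all add: mult.assoc)
    qed
    have "r2dp_laplace B q d S \<le> (\<integral>\<^sup>+ x. ennreal (W / G) * (g (q d') x * indicator S x) \<partial>lborel)"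
      unfolding R by (rule nn_integral_mono) (rule pw)
    also have "\<dots> = ennreal (W / G) * r2dp_laplace B q d' S"
      unfolding R by (rule nn_integral_cmult[OF gm])
    finally show "r2dp_laplace B q d S \<le> ennreal (exp (ln ((\<integral> b. 1 / b \<partial>B) / dmgf_inv B (- sensitivity q)))) * r2dp_laplace B q d' S"
      unfolding eps .
  qed
qed
end
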